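(* Let $k$ be a field of characteristic $0$ and let $F(X,Y), G(X,Y)\in k[X,Y]$ have total degree at most $n$ and satisfy $\det\begin{pmatrix}\partial F/\partial X & \partial F/\partial Y\\ \partial G/\partial X & \partial G/\partial Y\end{pmatrix}\in k^*$. Let $\mathcal{U}(t)=X+\sum_{i\ge1}u_i(X,Y)t^i$ and $\mathcal{V}(t)=Y+\sum_{i\ge1}v_i(X,Y)t^i$ (with $u_i,v_i\in k[X,Y]$) be the unique solution in $k[X,Y][[t]]$ of the system $$F(\mathcal{U}(t),\mathcal{V}(t))=tX+(1-t)F(X,Y),\qquad G(\mathcal{U}(t),\mathcal{V}(t))=tY+(1-t)G(X,Y),\qquad \mathcal{U}(0)=X,\ \mathcal{V}(0)=Y.$$ Let $\phi,\tau:k[X,Y]\to k[X,Y]$ be the $k$-algebra morphisms determined by $\phi(X)=F(X,Y)$, $\phi(Y)=G(X,Y)$, $\tau(X)=X+\sum_{i=1}^n u_i(X,Y)$, $\tau(Y)=Y+\sum_{i=1}^n v_i(X,Y)$. Then $\phi$ has a polynomial inverse (i.e. is an automorphism of $k[X,Y]$) if and only if $\phi\circ\tau=\mathrm{id}_{k[X,Y]}=\tau\circ\phi$.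
   Context: The existence and uniqueness of the power series solution $(\mathcal{U}(t),\mathcal{V}(t))$ under the Jacobian hypothesis is part of the setting (it holds). $k^*$ denotes the nonzero elements of $k$. *)

theory Defs
  imports "HOL-Computational_Algebra.Computational_Algebra"
begin

text \<open>Bivariate polynomials k[X,Y] are represented as (k[X])[Y], i.e. 'a poly poly:
  the outer variable is Y, the inner variable is X.\<close>

type_synonym 'a bipoly = "'a poly poly"

definition varX :: "'a::comm_ring_1 bipoly" where
  "varX = [:[:0, 1:]:]"

definition varY :: "'a::comm_ring_1 bipoly" where
  "varY = [:0, 1:]"

definition bconst :: "'a::comm_ring_1 \<Rightarrow> 'a bipoly" where
  "bconst c = [:[:c:]:]"

definition bcoeff :: "'a::zero bipoly \<Rightarrow> nat \<Rightarrow> nat \<Rightarrow> 'a" where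
  "bcoeff F i j = coeff (coeff F j) i"

definition total_degree_le :: "'a::zero bipoly \<Rightarrow> nat \<Rightarrow> bool" where
  "total_degree_le F n \<longleftrightarrow> (\<forall>i j. bcoeff F i j \<noteq> 0 \<longrightarrow> i + j \<le> n)"

definition beval :: "('a::zero \<Rightarrow> 'b::comm_ring_1) \<Rightarrow> 'a bipoly \<Rightarrow> 'b \<Rightarrow> 'b \<Rightarrow> 'b" where
  "beval c F a b = poly (map_poly (\<lambda>p. poly (map_poly c p) a) F) b"

definition dX :: "'a::idom bipoly \<Rightarrow> 'a bipoly" where
  "dX F = map_poly pderiv F"

definition dY :: "'a::idom bipoly \<Rightarrow> 'a bipoly" where
  "dY F = pderiv F"

definition jacobian :: "'a::idom bipoly \<Rightarrow> 'a bipoly \<Rightarrow> 'a bipoly" where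
  "jacobian F G = dX F * dY G - dY F * dX G"

definition bsubst :: "'a::comm_ring_1 bipoly \<Rightarrow> 'a bipoly \<Rightarrow> 'a bipoly \<Rightarrow> 'a bipoly" where
  "bsubst P Q H = beval bconst H P Q"

definition fconst :: "'a::comm_ring_1 \<Rightarrow> 'a bipoly fps" where
  "fconst c = fps_const (bconst c)"

end

theory Submission
  imports Defs
begin

definition hm :: "('a::comm_ring_1 \<Rightarrow> 'b::comm_ring_1) \<Rightarrow> bool" where
  "hm f \<longleftrightarrow> f 0 = 0 \<and> f 1 = 1 \<and> (\<forall>x y. f (x+y) = f x + f y) \<and> (\<forall>x y. f (x*y) = f x * f y)"

lemma hmD: assumes "hm f" shows "f 0 = 0" "f 1 = 1" "f (x+y) = f x + f y" "f (x*y) = f x * f y"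
  using assms unfolding hm_def by auto

lemma hm_sum: "hm f \<Longrightarrow> f (sum g A) = (\<Sum>x\<in>A. f (g x))"
  by (induction A rule: infinite_finite_induct) (auto simp: hmD)

lemma hm_minus: "hm f \<Longrightarrow> f (x - y) = f x - f y"
proof -
  assume h: "hm f"
  have "f (x - y) + f y = f x" using hmD(3)[OF h, of "x-y" y] by simp
  thus ?thesis by (simp add: eq_diff_eq)
qed

lemma hm_power: "hm f \<Longrightarrow> f (x ^ n) = f x ^ n"
  by (induction n) (auto simp: hmD)

lemma hm_comp: "hm f \<Longrightarrow> hm g \<Longrightarrow> hm (f \<circ> g)"
  unfolding hm_def by auto

lemma hm_comp': "hm f \<Longrightarrow> hm g \<Longrightarrow> hm (\<lambda>x. f (g x))"
  unfolding hm_def by auto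

lemma hm_id: "hm (\<lambda>x. x)" unfolding hm_def by auto

lemma hm_map_poly: assumes h: "hm f" shows "hm (map_poly f)"
  unfolding hm_def
proof (intro conjI allI)
  show "map_poly f 0 = 0" by simp
  show "map_poly f 1 = 1" using hmD(2)[OF h] by simp
  fix x y
  show "map_poly f (x + y) = map_poly f x + map_poly f y"
    by (rule poly_eqI) (simp add: coeff_map_poly hmD[OF h])
  show "map_poly f (x * y) = map_poly f x * map_poly f y"
    by (rule poly_eqI) (simp add: coeff_map_poly hmD[OF h] coeff_mult hm_sum[OF h])
qed

lemma hm_poly: "hm (\<lambda>p. poly p a)"
  unfolding hm_def by auto

lemma beval_alt: "beval c H a b = poly (map_poly (\<lambda>p. poly (map_poly c p) a) H) b"
  by (simp add: beval_def)

lemma hm_beval: assumes "hm c" shows "hm (\<lambda>H. beval c H a b)"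
  unfolding beval_def
  by (intro hm_comp'[OF hm_poly] hm_map_poly hm_comp'[OF hm_poly] hm_map_poly assms)

lemma hm_bconst: "hm (bconst :: 'a::comm_ring_1 \<Rightarrow> _)"
  unfolding hm_def bconst_def by (auto simp: one_pCons)

lemma hm_fconst: "hm (fconst :: 'a::comm_ring_1 \<Rightarrow> _)"
  unfolding hm_def fconst_def bconst_def by (auto simp: one_pCons fps_const_add fps_const_mult)

lemma hm_pconst: "hm (\<lambda>x::'a::comm_ring_1. [:x:])"
  unfolding hm_def by (auto simp: one_pCons)

lemma beval_bconst: "hm c \<Longrightarrow> beval c (bconst x) a b = c x"
  by (simp add: beval_def bconst_def hmD map_poly_pCons)

lemma beval_varX: "hm c \<Longrightarrow> beval c varX a b = a"
  by (simp add: beval_def varX_def hmD map_poly_pCons)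

lemma beval_varY: "hm c \<Longrightarrow> beval c varY a b = b"
  by (simp add: beval_def varY_def hmD map_poly_pCons)

lemma inner_decomp: "[:h:] = (\<Sum>i\<le>degree h. bconst (coeff h i) * varX ^ i)"
proof -
  have "[:h:] = (\<Sum>i\<le>degree h. [:monom (coeff h i) i:])"
    by (subst poly_as_sum_of_monoms[symmetric, of h]) (simp add: hm_sum[OF hm_pconst])
  also have "\<dots> = (\<Sum>i\<le>degree h. bconst (coeff h i) * varX ^ i)"
    by (intro sum.cong refl) (simp add: bconst_def varX_def monom_altdef hm_power[OF hm_pconst, symmetric])
  finally show ?thesis .
qed

lemma hm_unique:
  assumes "hm \<Phi>" "hm \<Psi>" "\<And>x. \<Phi> (bconst x) = \<Psi> (bconst x)"
    "\<Phi> varX = \<Psi> varX" "\<Phi> varY = \<Psi> varY"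
  shows "\<Phi> H = \<Psi> H"
proof (induction H)
  case 0 then show ?case using assms by (simp add: hmD)
next
  case (pCons h H)
  have e: "pCons h H = [:h:] + varY * H" by (simp add: varY_def)
  have "\<Phi> [:h:] = \<Psi> [:h:]"
    by (subst (1 2) inner_decomp) (simp add: hm_sum hmD hm_power assms)
  then show ?case using pCons by (simp add: e hmD assms)
qed

lemma beval_hom_comm:
  assumes c: "hm c" and h: "hm h"
  shows "h (beval c H a b) = beval (\<lambda>x. h (c x)) H (h a) (h b)"
proof (rule hm_unique[where \<Phi>="\<lambda>H. h (beval c H a b)" and \<Psi>="\<lambda>H. beval (\<lambda>x. h (c x)) H (h a) (h b)"])
  have hc: "hm (\<lambda>x. h (c x))" by (rule hm_comp'[OF h c])
  show "hm (\<lambda>H. h (beval c H a b))" by (rule hm_comp'[OF h hm_beval[OF c]])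
  show "hm (\<lambda>H. beval (\<lambda>x. h (c x)) H (h a) (h b))" by (rule hm_beval[OF hc])
  show "\<And>x. h (beval c (bconst x) a b) = beval (\<lambda>x. h (c x)) (bconst x) (h a) (h b)"
    using c hc by (simp add: beval_bconst)
  show "h (beval c varX a b) = beval (\<lambda>x. h (c x)) varX (h a) (h b)"
    using c hc by (simp add: beval_varX)
  show "h (beval c varY a b) = beval (\<lambda>x. h (c x)) varY (h a) (h b)"
    using c hc by (simp add: beval_varY)
qed

lemma hm_bsubst: "hm (bsubst A B)"
  unfolding bsubst_def[abs_def] by (rule hm_beval[OF hm_bconst])

lemma bsubst_bconst: "bsubst A B (bconst x) = bconst x"
  by (simp add: bsubst_def beval_bconst hm_bconst)
lemma bsubst_varX: "bsubst A B varX = A"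
  by (simp add: bsubst_def beval_varX hm_bconst)
lemma bsubst_varY: "bsubst A B varY = B"
  by (simp add: bsubst_def beval_varY hm_bconst)

lemma beval_bsubst:
  assumes c: "hm c"
  shows "beval c (bsubst A B H) a b = beval c H (beval c A a b) (beval c B a b)"
proof (rule hm_unique[where \<Phi>="\<lambda>H. beval c (bsubst A B H) a b" and \<Psi>="\<lambda>H. beval c H (beval c A a b) (beval c B a b)"])
  show "hm (\<lambda>H. beval c (bsubst A B H) a b)"
    by (rule hm_comp'[OF hm_beval[OF c] hm_bsubst])
  show "hm (\<lambda>H. beval c H (beval c A a b) (beval c B a b))" by (rule hm_beval[OF c])
qed (simp_all add: c beval_bconst bsubst_bconst bsubst_varX bsubst_varY beval_varX beval_varY)

lemma bsubst_id: "bsubst varX varY H = H"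
  by (rule hm_unique[where \<Psi>="\<lambda>x. x"]) (simp_all add: hm_id hm_bsubst bsubst_bconst bsubst_varX bsubst_varY)

lemma poly_sum_bound: fixes x :: "'a::comm_ring_1" assumes "degree p \<le> N" shows "poly p x = (\<Sum>i\<le>N. coeff p i * x ^ i)"
proof -
  have "poly p x = (\<Sum>i\<le>degree p. coeff p i * x ^ i)" by (rule poly_altdef)
  also have "\<dots> = (\<Sum>i\<le>N. coeff p i * x ^ i)"
    by (rule sum.mono_neutral_left) (use assms in \<open>auto simp: coeff_eq_0\<close>)
  finally show ?thesis .
qed

lemma beval_expand:
  assumes c: "hm c"
  shows "beval c H a b = (\<Sum>j\<le>degree H. (\<Sum>i\<le>degree (coeff H j). c (bcoeff H i j) * a ^ i) * b ^ j)"
proof -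
  let ?f = "\<lambda>p. poly (map_poly c p) a"
  have f0: "?f 0 = 0" by simp
  have "beval c H a b = (\<Sum>j\<le>degree H. coeff (map_poly ?f H) j * b ^ j)"
    unfolding beval_def by (rule poly_sum_bound) (rule map_poly_degree_leq)
  also have "\<dots> = (\<Sum>j\<le>degree H. (\<Sum>i\<le>degree (coeff H j). c (bcoeff H i j) * a ^ i) * b ^ j)"
  proof (intro sum.cong refl)
    fix j
    have "?f (coeff H j) = (\<Sum>i\<le>degree (coeff H j). coeff (map_poly c (coeff H j)) i * a ^ i)"
      by (rule poly_sum_bound) (rule map_poly_degree_leq)
    also have "\<dots> = (\<Sum>i\<le>degree (coeff H j). c (bcoeff H i j) * a ^ i)"
      using c by (simp add: coeff_map_poly hmD bcoeff_def)
    finally show "coeff (map_poly ?f H) j * b ^ j = (\<Sum>i\<le>degree (coeff H j). c (bcoeff H i j) * a ^ i) * b ^ j"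
      by (simp add: coeff_map_poly)
  qed
  finally show ?thesis .
qed

lemma deg_beval:
  fixes c :: "'a::comm_ring_1 \<Rightarrow> 'b::comm_ring_1 poly"
  assumes c: "hm c" and c0: "\<And>x. degree (c x) = 0" and a: "degree a \<le> 1" and b: "degree b \<le> 1"
    and H: "total_degree_le H n"
  shows "degree (beval c H a b) \<le> n"
  unfolding beval_expand[OF c] sum_distrib_right
proof (intro degree_sum_le finite_atMost)
  fix j i
  show "degree (c (bcoeff H i j) * a ^ i * b ^ j) \<le> n"
  proof (cases "bcoeff H i j = 0")
    case True then show ?thesis using c by (simp add: hmD)
  next
    case False
    then have "i + j \<le> n" using H by (auto simp: total_degree_le_def)
    have "degree (c (bcoeff H i j) * a ^ i * b ^ j) \<le> degree (c (bcoeff H i j)) + degree a * i + degree b * j"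
    proof -
      have "degree (c (bcoeff H i j) * a ^ i * b ^ j) \<le> degree (c (bcoeff H i j) * a ^ i) + degree (b ^ j)"
        by (rule degree_mult_le)
      also have "\<dots> \<le> (degree (c (bcoeff H i j)) + degree (a ^ i)) + degree (b ^ j)"
        using degree_mult_le by (rule add_right_mono)
      also have "\<dots> \<le> (degree (c (bcoeff H i j)) + degree a * i) + degree b * j"
        by (intro add_mono order.refl degree_power_le)
      finally show ?thesis .
    qed
    also have "\<dots> \<le> i + j" using a b c0 by (simp add: add_mono)
    finally show ?thesis using \<open>i + j \<le> n\<close> by simp
  qed
qed

lemma power_diff_dvd': "(x - y) dvd (x ^ n - (y::'a::comm_ring_1) ^ n)"
proof (induction n)
  case (Suc n)
  have "x ^ Suc n - y ^ Suc n = x * (x ^ n - y ^ n) + (x - y) * y ^ n" by (simp add: algebra_simps)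
  then show ?case using Suc by (simp add: dvd_add)
qed simp

lemma cong_beval_a:
  assumes c: "hm c"
  shows "(a - a') dvd (beval c H a b - beval c H a' b)"
  unfolding beval_expand[OF c] sum_subtractf[symmetric] left_diff_distrib[symmetric]
    right_diff_distrib[symmetric]
  apply (rule dvd_sum, rule dvd_mult2, rule dvd_sum, rule dvd_mult, rule power_diff_dvd')
  done

lemma cong_beval_b:
  assumes c: "hm c"
  shows "(b - b') dvd (beval c H a b - beval c H a b')"
  unfolding beval_expand[OF c] sum_subtractf[symmetric] right_diff_distrib[symmetric]
  apply (rule dvd_sum, rule dvd_mult, rule power_diff_dvd')
  done

lemma hm_fps_of_poly: "hm fps_of_poly"
  unfolding hm_def by (simp add: fps_of_poly_add fps_of_poly_mult)

lemma key_U: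
  fixes F G P :: "'a::comm_ring_1 bipoly" and U V :: "'a bipoly fps"
  assumes hU: "U' = beval fconst P (beval fconst F U V) (beval fconst G U V)"
    and eqF: "beval fconst F U V = fps_X * fps_const varX + (1 - fps_X) * fps_const F"
    and eqG: "beval fconst G U V = fps_X * fps_const varY + (1 - fps_X) * fps_const G"
    and deg: "total_degree_le P n"
  shows "(\<Sum>i\<le>n. fps_nth U' i) = P"
proof -
  define Ap where "Ap = [:F, varX - F:]"
  define Bp where "Bp = [:G, varY - G:]"
  define R where "R = beval (\<lambda>x. [:bconst x:]) P Ap Bp"
  have hc: "hm (\<lambda>x::'a. [:bconst x:])" by (rule hm_comp'[OF hm_pconst hm_bconst])
  have "fps_of_poly R = beval (\<lambda>x. fps_of_poly [:bconst x:]) P (fps_of_poly Ap) (fps_of_poly Bp)"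
    unfolding R_def by (rule beval_hom_comm[OF hc hm_fps_of_poly])
  also have "(\<lambda>x. fps_of_poly [:bconst x:]) = fconst"
    by (simp add: fun_eq_iff fps_of_poly_const fconst_def)
  also have "fps_of_poly Ap = beval fconst F U V"
    unfolding eqF Ap_def by (simp add: fps_of_poly_pCons fps_const_sub algebra_simps)
  also have "fps_of_poly Bp = beval fconst G U V"
    unfolding eqG Bp_def by (simp add: fps_of_poly_pCons fps_const_sub algebra_simps)
  finally have UR: "U' = fps_of_poly R" using hU by simp
  have degR: "degree R \<le> n"
    unfolding R_def by (rule deg_beval[OF hc _ _ _ deg]) (simp_all add: Ap_def Bp_def)
  have "(\<Sum>i\<le>n. fps_nth U' i) = poly R 1"
    using poly_sum_bound[OF degR, of 1] by (simp add: UR)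
  also have "poly R 1 = beval (\<lambda>x. poly [:bconst x:] 1) P (poly Ap 1) (poly Bp 1)"
    unfolding R_def by (rule beval_hom_comm[OF hc hm_poly])
  also have "\<dots> = bsubst varX varY P"
    by (simp add: Ap_def Bp_def bsubst_def)
  also have "\<dots> = P" by (rule bsubst_id)
  finally show ?thesis .
qed

interpretation pvs: vector_space "smult :: 'a::field \<Rightarrow> 'a poly \<Rightarrow> 'a poly"
  by unfold_locales (simp_all add: smult_add_right smult_add_left)

lemma z_power: "[:0,1:] ^ j = (monom 1 j :: 'a::comm_ring_1 poly)"
  by (induction j) (auto simp: monom_Suc)

lemma hm_pcompose: "hm (\<lambda>s. pcompose s q)"
  unfolding hm_def by (simp add: pcompose_add pcompose_mult pcompose_1)

lemma pcompose_as_sum: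
  fixes s q :: "'a::comm_ring_1 poly"
  assumes "\<forall>i\<ge>m. coeff s i = 0"
  shows "pcompose s q = (\<Sum>i<m. smult (coeff s i) (q ^ i))"
proof (cases m)
  case 0
  then have "s = 0" using assms by (simp add: poly_eq_iff)
  then show ?thesis using 0 by simp
next
  case (Suc m')
  have "degree s \<le> m'" using assms Suc by (intro degree_le) auto
  have "pcompose s q = poly (map_poly (\<lambda>x. [:x:]) s) q" by (rule pcompose_altdef)
  also have "\<dots> = (\<Sum>i\<le>m'. coeff (map_poly (\<lambda>x. [:x:]) s) i * q ^ i)"
    by (rule poly_sum_bound) (use \<open>degree s \<le> m'\<close> map_poly_degree_leq order_trans in blast)
  also have "\<dots> = (\<Sum>i<m. smult (coeff s i) (q ^ i))"
    unfolding Suc lessThan_Suc_atMost by (intro sum.cong refl) (simp add: coeff_map_poly)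
  finally show ?thesis .
qed

lemma dim_core:
  fixes p q f r :: "'a::field poly"
  assumes p: "p \<noteq> 0" and r: "r \<noteq> 0" and pr: "p dvd pcompose r q"
    and pf: "p dvd (pcompose f q - [:0,1:])"
  shows "degree p \<le> degree r"
proof -
  define d where "d = degree p"
  define m where "m = degree r"
  define S where "S = (\<lambda>j. monom (1::'a) j) ` {..<d}"
  define T where "T = (\<lambda>i. q ^ i mod p) ` {..<m}"
  have finT: "finite T" unfolding T_def by simp
  have cardT: "card T \<le> m" unfolding T_def using card_image_le[of "{..<m}"] by simp
  have cardS: "card S = d" unfolding S_def
    by (subst card_image) (auto simp: inj_on_def monom_eq_iff')
  have indep: "pvs.independent S"
    unfolding pvs.independent_explicit_finite_subsets
  proof (intro allI impI ballI)
    fix S' u v assume S': "S' \<subseteq> S" "finite S'" and sum0: "(\<Sum>v\<in>S'. smult (u v) v) = 0" and v: "v \<in> S'"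
    then obtain j where vj: "v = monom 1 j" unfolding S_def by blast
    have "0 = coeff (\<Sum>v\<in>S'. smult (u v) v) j" using sum0 by simp
    also have "\<dots> = (\<Sum>w\<in>S'. if w = v then u w else 0)"
      unfolding coeff_sum
    proof (intro sum.cong refl)
      fix w assume "w \<in> S'"
      then obtain k where wk: "w = monom 1 k" using S' unfolding S_def by blast
      show "coeff (smult (u w) w) j = (if w = v then u w else 0)"
        using wk vj by (auto simp: coeff_monom monom_eq_iff')
    qed
    also have "\<dots> = u v" using v S' by simp
    finally show "u v = 0" by simp
  qed
  have span: "S \<subseteq> pvs.span T"
  proof
    fix x assume "x \<in> S"
    then obtain j where j: "j < d" and xj: "x = monom 1 j" unfolding S_def by blast
    define s where "s = f ^ j mod r"
    have cs: "\<forall>i\<ge>m. coeff s i = 0"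
      using degree_mod_less[OF r, of "f ^ j"] unfolding s_def m_def
      by (auto intro: coeff_eq_0)
    have d1: "p dvd [:0,1:] ^ j - pcompose f q ^ j"
      using pf power_diff_dvd'[of "[:0,1:]" "pcompose f q" j]
      by (metis dvd_trans dvd_minus_iff minus_diff_eq)
    have "pcompose (f ^ j) q = pcompose s q + pcompose r q * pcompose (f ^ j div r) q"
      unfolding s_def by (metis hmD(3,4)[OF hm_pcompose] mod_mult_div_eq)
    then have d2: "p dvd pcompose (f ^ j) q - pcompose s q"
      using pr by simp
    have "pcompose f q ^ j = pcompose (f ^ j) q" by (rule hm_power[OF hm_pcompose, symmetric])
    with d1 d2 have "p dvd [:0,1:] ^ j - pcompose s q"
      by (metis (no_types, lifting) diff_add_cancel dvd_add add_diff_eq)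
    then have "[:0,1:] ^ j mod p = pcompose s q mod p" by (simp add: mod_eq_dvd_iff)
    moreover have "[:0,1:] ^ j mod p = x"
      unfolding xj z_power using j d_def by (intro mod_poly_less) (simp add: degree_monom_eq)
    moreover have "pcompose s q mod p = (\<Sum>i<m. smult (coeff s i) (q ^ i mod p))"
    proof -
      have "pcompose s q mod p = (\<Sum>i<m. smult (coeff s i) (q ^ i)) mod p"
        by (simp add: pcompose_as_sum[OF cs])
      also have "\<dots> = (\<Sum>i<m. smult (coeff s i) (q ^ i) mod p) mod p"
        by (simp add: mod_sum_eq)
      also have "\<dots> = (\<Sum>i<m. smult (coeff s i) (q ^ i mod p)) mod p"
        by (simp add: mod_smult_left)
      also have "\<dots> = (\<Sum>i<m. smult (coeff s i) (q ^ i mod p))"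
      proof (rule mod_poly_less)
        have "degree (\<Sum>i<m. smult (coeff s i) (q ^ i mod p)) \<le> d - 1"
        proof (rule degree_sum_le)
          fix i
          show "degree (smult (coeff s i) (q ^ i mod p)) \<le> d - 1"
            using degree_mod_less[OF p, of "q ^ i"] d_def by (cases "q ^ i mod p = 0") auto
        qed simp
        then show "degree (\<Sum>i<m. smult (coeff s i) (q ^ i mod p)) < degree p"
          using j d_def by linarith
      qed
      finally show ?thesis .
    qed
    ultimately have "x = (\<Sum>i<m. smult (coeff s i) (q ^ i mod p))" by simp
    also have "\<dots> \<in> pvs.span T"
      by (intro pvs.span_sum pvs.span_scale pvs.span_base) (auto simp: T_def)
    finally show "x \<in> pvs.span T" .
  qed
  have "card S \<le> card T" using pvs.independent_span_bound[OF finT indep span] by simp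
  then show ?thesis using cardS cardT d_def m_def by simp
qed

lemma line_core:
  fixes p q f g :: "'a::field poly"
  assumes p: "p \<noteq> 0" and pf: "p dvd (pcompose f q - [:0,1:])"
    and pg: "p dvd (pcompose g q - [:0,\<beta>:])" and fg: "smult \<beta> f \<noteq> g"
    and df: "degree f \<le> n" and dg: "degree g \<le> n"
  shows "degree p \<le> n"
proof -
  define r where "r = smult \<beta> f - g"
  have r: "r \<noteq> 0" using fg by (simp add: r_def)
  have "pcompose r q = smult \<beta> (pcompose f q - [:0,1:]) - (pcompose g q - [:0,\<beta>:])"
    by (simp add: r_def pcompose_diff pcompose_smult algebra_simps)
  then have pr: "p dvd pcompose r q" using pf pg by (simp add: dvd_diff dvd_smult)
  have "degree p \<le> degree r" by (rule dim_core[OF p r pr pf])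
  also have "degree r \<le> n" unfolding r_def
    by (rule order_trans[OF degree_diff_le_max]) (use df dg in \<open>auto intro: order_trans[OF degree_smult_le]\<close>)
  finally show ?thesis .
qed

lemma beval_pCons: "c 0 = 0 \<Longrightarrow> beval c (pCons h H) a b = poly (map_poly c h) a + b * beval c H a b"
  by (simp add: beval_def map_poly_pCons)

lemma coeff_Eb:
  fixes H :: "'a::comm_ring_1 bipoly"
  shows "coeff (beval (\<lambda>x. [:x:]) H [:0,1:] [:0,\<beta>:]) m = (\<Sum>j\<le>m. bcoeff H (m-j) j * \<beta> ^ j)"
proof (induction H arbitrary: m)
  case 0 then show ?case by (simp add: beval_def bcoeff_def)
next
  case (pCons h H)
  have e: "beval (\<lambda>x. [:x:]) (pCons h H) [:0,1:] [:0,\<beta>:] = h + [:0,\<beta>:] * beval (\<lambda>x. [:x:]) H [:0,1:] [:0,\<beta>:]"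
    by (simp add: beval_pCons pcompose_altdef[symmetric])
  show ?case
  proof (cases m)
    case 0 then show ?thesis by (simp add: e bcoeff_def)
  next
    case (Suc m')
    have "(\<Sum>j\<le>m. bcoeff (pCons h H) (m-j) j * \<beta> ^ j)
        = bcoeff (pCons h H) m 0 + (\<Sum>j\<le>m'. bcoeff (pCons h H) (m - Suc j) (Suc j) * \<beta> ^ Suc j)"
      unfolding Suc by (subst sum.atMost_Suc_shift) simp
    also have "\<dots> = coeff h m + \<beta> * (\<Sum>j\<le>m'. bcoeff H (m' - j) j * \<beta> ^ j)"
      by (simp add: bcoeff_def Suc sum_distrib_left algebra_simps)
    finally show ?thesis using pCons.IH[of m'] by (simp add: e Suc)
  qed
qed

lemma beval_00: "hm c \<Longrightarrow> beval c H 0 0 = c (bcoeff H 0 0)"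
  by (simp add: beval_def poly_0_coeff_0 coeff_map_poly hmD bcoeff_def)

lemma choose_beta:
  fixes hp f g :: "'a::field_char_0 poly"
  assumes hp: "hp \<noteq> 0" and fg: "\<not> (f = 0 \<and> g = 0)"
  shows "\<exists>\<beta>. poly hp \<beta> \<noteq> 0 \<and> smult \<beta> f \<noteq> g"
proof -
  have f1: "finite {x. poly hp x = 0}" by (rule poly_roots_finite[OF hp])
  have f2: "finite {\<beta>. smult \<beta> f = g}"
  proof (cases "f = 0")
    case True then show ?thesis using fg by auto
  next
    case False
    have "{\<beta>. smult \<beta> f = g} \<subseteq> {SOME \<beta>. smult \<beta> f = g}"
    proof
      fix x assume x: "x \<in> {\<beta>. smult \<beta> f = g}"
      then have ex: "\<exists>\<beta>. smult \<beta> f = g" by auto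
      have "smult (SOME \<beta>. smult \<beta> f = g) f = g" by (rule someI_ex[OF ex])
      then have "smult (x - (SOME \<beta>. smult \<beta> f = g)) f = 0" using x by (simp add: smult_diff_left)
      then show "x \<in> {SOME \<beta>. smult \<beta> f = g}" using False by simp
    qed
    then show ?thesis by (rule finite_subset) simp
  qed
  have "finite ({x. poly hp x = 0} \<union> {\<beta>. smult \<beta> f = g})" using f1 f2 by simp
  then obtain \<beta> where "\<beta> \<notin> {x. poly hp x = 0} \<union> {\<beta>. smult \<beta> f = g}"
    using ex_new_if_finite[OF infinite_UNIV_char_0] by blast
  then show ?thesis by auto
qed

lemma hpol_nz:
  fixes H :: "'a::comm_ring_1 bipoly"
  assumes "bcoeff H i j \<noteq> 0"
  shows "(\<Sum>k\<le>i+j. monom (bcoeff H (i + j - k) k) k) \<noteq> 0"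
proof
  assume "(\<Sum>k\<le>i+j. monom (bcoeff H (i + j - k) k) k) = 0"
  then have "coeff (\<Sum>k\<le>i+j. monom (bcoeff H (i + j - k) k) k) j = 0" by simp
  moreover have "coeff (\<Sum>k\<le>i+j. monom (bcoeff H (i + j - k) k) k) j = bcoeff H i j"
    by (simp add: coeff_sum coeff_monom)
  ultimately show False using assms by simp
qed

lemma poly_hpol:
  fixes H :: "'a::comm_ring_1 bipoly"
  shows "poly (\<Sum>k\<le>m. monom (bcoeff H (m - k) k) k) \<beta> = (\<Sum>k\<le>m. bcoeff H (m - k) k * \<beta> ^ k)"
  by (simp add: poly_sum poly_monom)

lemma hm_pc: "hm (\<lambda>x::'a::comm_ring_1. [:x:])" by (rule hm_pconst)

lemma degP_bound:
  fixes F G P Q :: "'a::field_char_0 bipoly"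
  assumes degF: "total_degree_le F n" and degG: "total_degree_le G n"
    and h3: "bsubst P Q F = varX" and h4: "bsubst P Q G = varY" and h2: "bsubst F G Q = varY"
  shows "total_degree_le P n"
  unfolding total_degree_le_def
proof (intro allI impI)
  fix i j assume nz: "bcoeff P i j \<noteq> 0"
  define m where "m = i + j"
  define hp where "hp = (\<Sum>k\<le>m. monom (bcoeff P (m - k) k) k)"
  have hp: "hp \<noteq> 0" unfolding hp_def m_def by (rule hpol_nz[OF nz])
  let ?pc = "\<lambda>x::'a. [:x:]"
  define f where "f = beval ?pc F 0 [:0,1:]"
  define g where "g = beval ?pc G 0 [:0,1:]"
  have fg: "\<not> (f = 0 \<and> g = 0)"
  proof
    assume fg0: "f = 0 \<and> g = 0"
    have "[:0,1:] = beval ?pc varY 0 [:0,1:]" by (simp add: beval_varY hm_pc)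
    also have "\<dots> = beval ?pc Q f g" unfolding h2[symmetric] f_def g_def by (rule beval_bsubst[OF hm_pc])
    also have "\<dots> = [:bcoeff Q 0 0:]" using fg0 by (simp add: beval_00 hm_pc)
    finally show False by simp
  qed
  obtain \<beta> where b1: "poly hp \<beta> \<noteq> 0" and b2: "smult \<beta> f \<noteq> g"
    using choose_beta[OF hp fg] by blast
  define p where "p = beval ?pc P [:0,1:] [:0,\<beta>:]"
  define q where "q = beval ?pc Q [:0,1:] [:0,\<beta>:]"
  have cp: "coeff p m \<noteq> 0" using b1 unfolding p_def hp_def coeff_Eb poly_hpol .
  then have p0: "p \<noteq> 0" by auto
  have mp: "m \<le> degree p" using cp by (rule le_degree)
  have Fpq: "beval ?pc F p q = [:0,1:]"
    unfolding p_def q_def beval_bsubst[OF hm_pc, symmetric] h3 by (simp add: beval_varX hm_pc)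
  have Gpq: "beval ?pc G p q = [:0,\<beta>:]"
    unfolding p_def q_def beval_bsubst[OF hm_pc, symmetric] h4 by (simp add: beval_varY hm_pc)
  have fq: "pcompose f q = beval ?pc F 0 q"
    unfolding f_def by (subst beval_hom_comm[OF hm_pc hm_pcompose]) (simp add: pcompose_pCons)
  have gq: "pcompose g q = beval ?pc G 0 q"
    unfolding g_def by (subst beval_hom_comm[OF hm_pc hm_pcompose]) (simp add: pcompose_pCons)
  have pf: "p dvd (pcompose f q - [:0,1:])"
    using cong_beval_a[OF hm_pc, of p 0 F q] unfolding Fpq fq
    by (metis diff_zero dvd_minus_iff minus_diff_eq)
  have pg: "p dvd (pcompose g q - [:0,\<beta>:])"
    using cong_beval_a[OF hm_pc, of p 0 G q] unfolding Gpq gq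
    by (metis diff_zero dvd_minus_iff minus_diff_eq)
  have df: "degree f \<le> n" unfolding f_def by (rule deg_beval[OF hm_pc _ _ _ degF]) simp_all
  have dg: "degree g \<le> n" unfolding g_def by (rule deg_beval[OF hm_pc _ _ _ degG]) simp_all
  have "degree p \<le> n" by (rule line_core[OF p0 pf pg b2 df dg])
  then show "i + j \<le> n" using mp m_def by simp
qed

lemma degQ_bound:
  fixes F G P Q :: "'a::field_char_0 bipoly"
  assumes degF: "total_degree_le F n" and degG: "total_degree_le G n"
    and h3: "bsubst P Q F = varX" and h4: "bsubst P Q G = varY" and h1: "bsubst F G P = varX"
  shows "total_degree_le Q n"
  unfolding total_degree_le_def
proof (intro allI impI)
  fix i j assume nz: "bcoeff Q i j \<noteq> 0"
  define m where "m = i + j"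
  define hp where "hp = (\<Sum>k\<le>m. monom (bcoeff Q (m - k) k) k)"
  have hp: "hp \<noteq> 0" unfolding hp_def m_def by (rule hpol_nz[OF nz])
  let ?pc = "\<lambda>x::'a. [:x:]"
  define f where "f = beval ?pc F [:0,1:] 0"
  define g where "g = beval ?pc G [:0,1:] 0"
  have fg: "\<not> (f = 0 \<and> g = 0)"
  proof
    assume fg0: "f = 0 \<and> g = 0"
    have "[:0,1:] = beval ?pc varX [:0,1:] 0" by (simp add: beval_varX hm_pc)
    also have "\<dots> = beval ?pc P f g" unfolding h1[symmetric] f_def g_def by (rule beval_bsubst[OF hm_pc])
    also have "\<dots> = [:bcoeff P 0 0:]" using fg0 by (simp add: beval_00 hm_pc)
    finally show False by simp
  qed
  obtain \<beta> where b1: "poly hp \<beta> \<noteq> 0" and b2: "smult \<beta> f \<noteq> g"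
    using choose_beta[OF hp fg] by blast
  define p where "p = beval ?pc Q [:0,1:] [:0,\<beta>:]"
  define q where "q = beval ?pc P [:0,1:] [:0,\<beta>:]"
  have cp: "coeff p m \<noteq> 0" using b1 unfolding p_def hp_def coeff_Eb poly_hpol .
  then have p0: "p \<noteq> 0" by auto
  have mp: "m \<le> degree p" using cp by (rule le_degree)
  have Fpq: "beval ?pc F q p = [:0,1:]"
    unfolding p_def q_def beval_bsubst[OF hm_pc, symmetric] h3 by (simp add: beval_varX hm_pc)
  have Gpq: "beval ?pc G q p = [:0,\<beta>:]"
    unfolding p_def q_def beval_bsubst[OF hm_pc, symmetric] h4 by (simp add: beval_varY hm_pc)
  have fq: "pcompose f q = beval ?pc F q 0"
    unfolding f_def by (subst beval_hom_comm[OF hm_pc hm_pcompose]) (simp add: pcompose_pCons)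
  have gq: "pcompose g q = beval ?pc G q 0"
    unfolding g_def by (subst beval_hom_comm[OF hm_pc hm_pcompose]) (simp add: pcompose_pCons)
  have pf: "p dvd (pcompose f q - [:0,1:])"
    using cong_beval_b[OF hm_pc, of p 0 F q] unfolding Fpq fq
    by (metis diff_zero dvd_minus_iff minus_diff_eq)
  have pg: "p dvd (pcompose g q - [:0,\<beta>:])"
    using cong_beval_b[OF hm_pc, of p 0 G q] unfolding Gpq gq
    by (metis diff_zero dvd_minus_iff minus_diff_eq)
  have df: "degree f \<le> n" unfolding f_def by (rule deg_beval[OF hm_pc _ _ _ degF]) simp_all
  have dg: "degree g \<le> n" unfolding g_def by (rule deg_beval[OF hm_pc _ _ _ degG]) simp_all
  have "degree p \<le> n" by (rule line_core[OF p0 pf pg b2 df dg])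
  then show "i + j \<le> n" using mp m_def by simp
qed

theorem corollary3p3:
  fixes F G :: "'a::field_char_0 bipoly" and n :: nat
    and U V :: "'a bipoly fps"
  assumes degF: "total_degree_le F n" and degG: "total_degree_le G n"
    and jac: "\<exists>c. c \<noteq> 0 \<and> jacobian F G = bconst c"
    and U0: "fps_nth U 0 = varX" and V0: "fps_nth V 0 = varY"
    and eqF: "beval fconst F U V = fps_X * fps_const varX + (1 - fps_X) * fps_const F"
    and eqG: "beval fconst G U V = fps_X * fps_const varY + (1 - fps_X) * fps_const G"
  shows "(\<exists>P Q. bsubst F G \<circ> bsubst P Q = id \<and> bsubst P Q \<circ> bsubst F G = id)
     \<longleftrightarrow> (let tau = bsubst (\<Sum>i\<le>n. fps_nth U i) (\<Sum>i\<le>n. fps_nth V i)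
          in bsubst F G \<circ> tau = id \<and> tau \<circ> bsubst F G = id)"
proof
  assume "\<exists>P Q. bsubst F G \<circ> bsubst P Q = id \<and> bsubst P Q \<circ> bsubst F G = id"
  then obtain P Q where c1: "bsubst F G \<circ> bsubst P Q = id" and c2: "bsubst P Q \<circ> bsubst F G = id"
    by blast
  have h1: "bsubst F G P = varX" using fun_cong[OF c1, of varX] by (simp add: bsubst_varX)
  have h2: "bsubst F G Q = varY" using fun_cong[OF c1, of varY] by (simp add: bsubst_varY)
  have h3: "bsubst P Q F = varX" using fun_cong[OF c2, of varX] by (simp add: bsubst_varX)
  have h4: "bsubst P Q G = varY" using fun_cong[OF c2, of varY] by (simp add: bsubst_varY)
  have dP: "total_degree_le P n" by (rule degP_bound[OF degF degG h3 h4 h2])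
  have dQ: "total_degree_le Q n" by (rule degQ_bound[OF degF degG h3 h4 h1])
  have "U = beval fconst varX U V" by (simp add: beval_varX hm_fconst)
  also have "\<dots> = beval fconst P (beval fconst F U V) (beval fconst G U V)"
    unfolding h1[symmetric] by (rule beval_bsubst[OF hm_fconst])
  finally have sU: "(\<Sum>i\<le>n. fps_nth U i) = P" by (rule key_U[OF _ eqF eqG dP])
  have "V = beval fconst varY U V" by (simp add: beval_varY hm_fconst)
  also have "\<dots> = beval fconst Q (beval fconst F U V) (beval fconst G U V)"
    unfolding h2[symmetric] by (rule beval_bsubst[OF hm_fconst])
  finally have sV: "(\<Sum>i\<le>n. fps_nth V i) = Q" by (rule key_U[OF _ eqF eqG dQ])
  show "let tau = bsubst (\<Sum>i\<le>n. fps_nth U i) (\<Sum>i\<le>n. fps_nth V i)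
          in bsubst F G \<circ> tau = id \<and> tau \<circ> bsubst F G = id"
    unfolding sU sV Let_def using c1 c2 by simp
next
  assume "let tau = bsubst (\<Sum>i\<le>n. fps_nth U i) (\<Sum>i\<le>n. fps_nth V i)
          in bsubst F G \<circ> tau = id \<and> tau \<circ> bsubst F G = id"
  then show "\<exists>P Q. bsubst F G \<circ> bsubst P Q = id \<and> bsubst P Q \<circ> bsubst F G = id"
    unfolding Let_def by blast
qed

end
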